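(* Let $G$ be a simple graph on vertex set $\{1,\dots,n\}$. The lexicographic algorithm (Algorithm 1) applied to $G$ returns "failure" if and only if $G$ is not twin-free; and if $G$ is twin-free, the set $C_n$ it returns is an identifying code of $G$.
   Context: Vertices of $G$ are identified with the integers $1,\dots,n$ and ordered by the usual order. For a vertex $v$, $N(v)=\{v\}\cup\{w : vw\in E(G)\}$ is its closed neighbourhood. A set $C\subseteq V(G)$ is an identifying code if the sets $N(v)\cap C$, $v\in V(G)$, are all nonempty and pairwise distinct. $G$ is twin-free if $N(v)\neq N(w)$ for all distinct vertices $v,w$. The lexicographic algorithm (Algorithm 1): set $C_0=\emptyset$. For $j=1,2,\dots,n$ in turn: (i) if $N(j)\cap C_{j-1}=\emptyset$, set $C_j=C_{j-1}\cup\{\min N(j)\}$; (ii) otherwise, if there exists $k\in\{1,\dots,j-1\}$ with $N(k)\cap C_{j-1}=N(j)\cap C_{j-1}$, let $k$ be the least such index; if $N(j)\neq N(k)$ set $C_j=C_{j-1}\cup\{\min(N(j)\triangle N(k))\}$, while if $N(j)=N(k)$ the algorithm stops immediately and returns "failure"; (iii) otherwise set $C_j=C_{j-1}$. If the algorithm never fails, it returns $C_n$. Here $\triangle$ denotes symmetric difference. *)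

theory Defs
  imports Main
begin

text \<open>A simple graph on vertex set {1..n} is given by a symmetric irreflexive
  adjacency relation E on nat; only vertices in {1..n} are considered.\<close>

definition simple_graph :: "(nat \<Rightarrow> nat \<Rightarrow> bool) \<Rightarrow> bool" where
  "simple_graph E \<longleftrightarrow> (\<forall>v w. E v w \<longrightarrow> E w v) \<and> (\<forall>v. \<not> E v v)"

definition cnbh :: "(nat \<Rightarrow> nat \<Rightarrow> bool) \<Rightarrow> nat \<Rightarrow> nat \<Rightarrow> nat set" where
  "cnbh E n v = {v} \<union> {w \<in> {1..n}. E v w}"

definition twin_free :: "(nat \<Rightarrow> nat \<Rightarrow> bool) \<Rightarrow> nat \<Rightarrow> bool" where
  "twin_free E n \<longleftrightarrow> (\<forall>v\<in>{1..n}. \<forall>w\<in>{1..n}. v \<noteq> w \<longrightarrow> cnbh E n v \<noteq> cnbh E n w)"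

definition identifying_code :: "(nat \<Rightarrow> nat \<Rightarrow> bool) \<Rightarrow> nat \<Rightarrow> nat set \<Rightarrow> bool" where
  "identifying_code E n C \<longleftrightarrow> C \<subseteq> {1..n} \<and>
     (\<forall>v\<in>{1..n}. cnbh E n v \<inter> C \<noteq> {}) \<and>
     (\<forall>v\<in>{1..n}. \<forall>w\<in>{1..n}. v \<noteq> w \<longrightarrow> cnbh E n v \<inter> C \<noteq> cnbh E n w \<inter> C)"

text \<open>One step j of Algorithm 1 applied to the current set C = C_{j-1};
  None encodes "failure".\<close>
definition lex_step :: "(nat \<Rightarrow> nat \<Rightarrow> bool) \<Rightarrow> nat \<Rightarrow> nat \<Rightarrow> nat set \<Rightarrow> nat set option" where
  "lex_step E n j C =
     (if cnbh E n j \<inter> C = {} then Some (C \<union> {Min (cnbh E n j)})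
      else if \<exists>k\<in>{1..<j}. cnbh E n k \<inter> C = cnbh E n j \<inter> C then
        (let k = (LEAST k. k \<in> {1..<j} \<and> cnbh E n k \<inter> C = cnbh E n j \<inter> C) in
         if cnbh E n j \<noteq> cnbh E n k
         then Some (C \<union> {Min ((cnbh E n j - cnbh E n k) \<union> (cnbh E n k - cnbh E n j))})
         else None)
      else Some C)"

fun lex_run :: "(nat \<Rightarrow> nat \<Rightarrow> bool) \<Rightarrow> nat \<Rightarrow> nat \<Rightarrow> nat set option" where
  "lex_run E n 0 = Some {}"
| "lex_run E n (Suc j) = (case lex_run E n j of None \<Rightarrow> None | Some C \<Rightarrow> lex_step E n (Suc j) C)"

definition lex_algorithm :: "(nat \<Rightarrow> nat \<Rightarrow> bool) \<Rightarrow> nat \<Rightarrow> nat set option" where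
  "lex_algorithm E n = lex_run E n n"

end

theory Submission
  imports Defs
begin

definition inv_lex :: "(nat \<Rightarrow> nat \<Rightarrow> bool) \<Rightarrow> nat \<Rightarrow> nat \<Rightarrow> nat set \<Rightarrow> bool" where
  "inv_lex E n j C \<longleftrightarrow> C \<subseteq> {1..n} \<and> (\<forall>v\<in>{1..j}. cnbh E n v \<inter> C \<noteq> {}) \<and>
     (\<forall>v\<in>{1..j}. \<forall>w\<in>{1..j}. v \<noteq> w \<longrightarrow> cnbh E n v \<inter> C \<noteq> cnbh E n w \<inter> C)"

lemma cnbh_sub: "v \<in> {1..n} \<Longrightarrow> cnbh E n v \<subseteq> {1..n}"
  unfolding cnbh_def by auto

lemma cnbh_fin: "finite (cnbh E n v)"
  unfolding cnbh_def by auto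

lemma cnbh_self: "v \<in> cnbh E n v"
  unfolding cnbh_def by auto

lemma step_lemma:
  assumes I: "inv_lex E n j C" and jn: "Suc j \<le> n"
  shows "case lex_step E n (Suc j) C of None \<Rightarrow> \<not> twin_free E n
           | Some C' \<Rightarrow> inv_lex E n (Suc j) C'"
proof -
  define N where "N = cnbh E n"
  have C1: "C \<subseteq> {1..n}" and C2: "\<forall>v\<in>{1..j}. N v \<inter> C \<noteq> {}"
    and C3: "\<forall>v\<in>{1..j}. \<forall>w\<in>{1..j}. v \<noteq> w \<longrightarrow> N v \<inter> C \<noteq> N w \<inter> C"
    using I unfolding inv_lex_def N_def by auto
  have Nsub: "\<And>v. v \<in> {1..n} \<Longrightarrow> N v \<subseteq> {1..n}" unfolding N_def by (rule cnbh_sub)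
  have Nfin: "\<And>v. finite (N v)" unfolding N_def by (rule cnbh_fin)
  have Nself: "\<And>v. v \<in> N v" unfolding N_def by (rule cnbh_self)
  have jin: "Suc j \<in> {1..n}" using jn by auto
  have mono: "\<And>D v w. C \<subseteq> D \<Longrightarrow> N v \<inter> C \<noteq> N w \<inter> C \<Longrightarrow> N v \<inter> D \<noteq> N w \<inter> D"
    by blast
  have mono2: "\<And>D v. C \<subseteq> D \<Longrightarrow> N v \<inter> C \<noteq> {} \<Longrightarrow> N v \<inter> D \<noteq> {}"
    by blast
  show ?thesis
  proof (cases "N (Suc j) \<inter> C = {}")
    case True
    define m where "m = Min (N (Suc j))"
    have mN: "m \<in> N (Suc j)" unfolding m_def using Nfin Nself by (metis Min_in empty_iff)
    have mC: "m \<notin> C" using True mN by blast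
    have st: "lex_step E n (Suc j) C = Some (C \<union> {m})"
      using True unfolding lex_step_def m_def N_def by simp
    have eq: "N (Suc j) \<inter> (C \<union> {m}) = {m}" using True mN by blast
    have "inv_lex E n (Suc j) (C \<union> {m})"
      unfolding inv_lex_def N_def[symmetric]
    proof (intro conjI ballI impI)
      show "C \<union> {m} \<subseteq> {1..n}" using C1 mN Nsub[OF jin] by blast
    next
      fix v assume v: "v \<in> {1..Suc j}"
      show "N v \<inter> (C \<union> {m}) \<noteq> {}"
      proof (cases "v = Suc j")
        case True then show ?thesis using eq by simp
      next
        case False then have "v \<in> {1..j}" using v by auto
        then show ?thesis using C2 by blast
      qed
    next
      fix v w assume v: "v \<in> {1..Suc j}" and w: "w \<in> {1..Suc j}" and vw: "v \<noteq> w"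
      have key: "\<And>u. u \<in> {1..j} \<Longrightarrow> N u \<inter> (C \<union> {m}) \<noteq> {m}"
      proof
        fix u assume u: "u \<in> {1..j}" and e: "N u \<inter> (C \<union> {m}) = {m}"
        have "N u \<inter> C \<subseteq> {m}" using e by blast
        then have "N u \<inter> C = {}" using mC by blast
        then show False using C2 u by blast
      qed
      show "N v \<inter> (C \<union> {m}) \<noteq> N w \<inter> (C \<union> {m})"
      proof (cases "v = Suc j")
        case True
        then have "w \<in> {1..j}" using w vw by auto
        then show ?thesis using key eq True by metis
      next
        case F: False
        show ?thesis
        proof (cases "w = Suc j")
          case True
          then have "v \<in> {1..j}" using v F by auto
          then show ?thesis using key eq True by metis
        next
          case False
          then have "v \<in> {1..j}" "w \<in> {1..j}" using v w F by auto
          then show ?thesis using C3 vw mono[of "C \<union> {m}"] by blast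
        qed
      qed
    qed
    then show ?thesis using st by simp
  next
    case ne: False
    show ?thesis
    proof (cases "\<exists>k\<in>{1..<Suc j}. N k \<inter> C = N (Suc j) \<inter> C")
      case ex: True
      define k where "k = (LEAST k. k \<in> {1..<Suc j} \<and> N k \<inter> C = N (Suc j) \<inter> C)"
      have kP: "k \<in> {1..<Suc j} \<and> N k \<inter> C = N (Suc j) \<inter> C"
        unfolding k_def using ex by (metis (mono_tags, lifting) LeastI)
      have kin: "k \<in> {1..j}" and kC: "N k \<inter> C = N (Suc j) \<inter> C" using kP by auto
      show ?thesis
      proof (cases "N (Suc j) = N k")
        case True
        have st: "lex_step E n (Suc j) C = None"
          using ne ex True unfolding lex_step_def N_def k_def[unfolded N_def, symmetric] by (simp add: Let_def)
        have kn: "k \<in> {1..n}" "k \<noteq> Suc j" using kin jn by auto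
        have "\<not> twin_free E n"
        proof
          assume "twin_free E n"
          then have "cnbh E n k \<noteq> cnbh E n (Suc j)" using kn jin unfolding twin_free_def by blast
          then show False using True unfolding N_def by simp
        qed
        then show ?thesis using st by simp
      next
        case False
        define x where "x = Min ((N (Suc j) - N k) \<union> (N k - N (Suc j)))"
        have xin: "x \<in> (N (Suc j) - N k) \<union> (N k - N (Suc j))"
          unfolding x_def using Nfin False by (intro Min_in) auto
        have st: "lex_step E n (Suc j) C = Some (C \<union> {x})"
          using ne ex False unfolding lex_step_def N_def k_def[unfolded N_def, symmetric]
          by (simp add: Let_def x_def N_def)
        have kn: "k \<in> {1..n}" using kin jn by auto
        have "inv_lex E n (Suc j) (C \<union> {x})"
          unfolding inv_lex_def N_def[symmetric]
        proof (intro conjI ballI impI)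
          show "C \<union> {x} \<subseteq> {1..n}" using C1 xin Nsub[OF jin] Nsub[OF kn] by blast
        next
          fix v assume v: "v \<in> {1..Suc j}"
          show "N v \<inter> (C \<union> {x}) \<noteq> {}"
          proof (cases "v = Suc j")
            case True then show ?thesis using ne by blast
          next
            case False then have "v \<in> {1..j}" using v by auto
            then show ?thesis using C2 by blast
          qed
        next
          have sep: "N (Suc j) \<inter> (C \<union> {x}) \<noteq> N k \<inter> (C \<union> {x})" using xin by blast
          have other: "\<And>u. u \<in> {1..j} \<Longrightarrow> N u \<inter> (C \<union> {x}) \<noteq> N (Suc j) \<inter> (C \<union> {x})"
          proof -
            fix u assume u: "u \<in> {1..j}"
            show "N u \<inter> (C \<union> {x}) \<noteq> N (Suc j) \<inter> (C \<union> {x})"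
            proof (cases "u = k")
              case True then show ?thesis using sep by metis
            next
              case False
              then have "N u \<inter> C \<noteq> N (Suc j) \<inter> C" using C3 u kin kC by metis
              then show ?thesis using mono[of "C \<union> {x}"] by blast
            qed
          qed
          fix v w assume v: "v \<in> {1..Suc j}" and w: "w \<in> {1..Suc j}" and vw: "v \<noteq> w"
          show "N v \<inter> (C \<union> {x}) \<noteq> N w \<inter> (C \<union> {x})"
          proof (cases "v = Suc j")
            case True
            then have "w \<in> {1..j}" using w vw by auto
            then show ?thesis using other True by metis
          next
            case F: False
            show ?thesis
            proof (cases "w = Suc j")
              case True
              then have "v \<in> {1..j}" using v F by auto
              then show ?thesis using other True by metis
            next
              case False
              then have "v \<in> {1..j}" "w \<in> {1..j}" using v w F by auto
              then show ?thesis using C3 vw mono[of "C \<union> {x}"] by blast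
            qed
          qed
        qed
        then show ?thesis using st by simp
      qed
    next
      case nex: False
      have st: "lex_step E n (Suc j) C = Some C"
        using ne nex unfolding lex_step_def N_def by simp
      have "inv_lex E n (Suc j) C"
        unfolding inv_lex_def N_def[symmetric]
      proof (intro conjI ballI impI)
        show "C \<subseteq> {1..n}" by (rule C1)
      next
        fix v assume v: "v \<in> {1..Suc j}"
        show "N v \<inter> C \<noteq> {}"
        proof (cases "v = Suc j")
          case True then show ?thesis using ne by blast
        next
          case False then have "v \<in> {1..j}" using v by auto
          then show ?thesis using C2 by blast
        qed
      next
        fix v w assume v: "v \<in> {1..Suc j}" and w: "w \<in> {1..Suc j}" and vw: "v \<noteq> w"
        have other: "\<And>u. u \<in> {1..j} \<Longrightarrow> N u \<inter> C \<noteq> N (Suc j) \<inter> C"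
          using nex by auto
        show "N v \<inter> C \<noteq> N w \<inter> C"
        proof (cases "v = Suc j")
          case True
          then have "w \<in> {1..j}" using w vw by auto
          then show ?thesis using other True by metis
        next
          case F: False
          show ?thesis
          proof (cases "w = Suc j")
            case True
            then have "v \<in> {1..j}" using v F by auto
            then show ?thesis using other True by metis
          next
            case False
            then have "v \<in> {1..j}" "w \<in> {1..j}" using v w F by auto
            then show ?thesis using C3 vw by blast
          qed
        qed
      qed
      then show ?thesis using st by simp
    qed
  qed
qed

lemma run_lemma:
  "j \<le> n \<Longrightarrow> (case lex_run E n j of None \<Rightarrow> \<not> twin_free E n | Some C \<Rightarrow> inv_lex E n j C)"
proof (induction j)
  case 0
  then show ?case by (simp add: inv_lex_def)
next
  case (Suc j)
  then have IH: "case lex_run E n j of None \<Rightarrow> \<not> twin_free E n | Some C \<Rightarrow> inv_lex E n j C" by simp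
  show ?case
  proof (cases "lex_run E n j")
    case None then show ?thesis using IH by simp
  next
    case (Some C)
    then show ?thesis using IH step_lemma[of E n j C] Suc.prems by simp
  qed
qed

theorem proposition1:
  fixes E :: "nat \<Rightarrow> nat \<Rightarrow> bool" and n :: nat
  assumes "simple_graph E"
  shows "(lex_algorithm E n = None \<longleftrightarrow> \<not> twin_free E n) \<and>
         (twin_free E n \<longrightarrow> (\<exists>C. lex_algorithm E n = Some C \<and> identifying_code E n C))"
proof -
  have R: "case lex_algorithm E n of None \<Rightarrow> \<not> twin_free E n | Some C \<Rightarrow> inv_lex E n n C"
    unfolding lex_algorithm_def using run_lemma[of n n E] by simp
  show ?thesis
  proof (cases "lex_algorithm E n")
    case None then show ?thesis using R by simp
  next
    case (Some C)
    then have I: "inv_lex E n n C" using R by simp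
    then have ic: "identifying_code E n C" unfolding inv_lex_def identifying_code_def by blast
    then have "twin_free E n" unfolding identifying_code_def twin_free_def by metis
    then show ?thesis using Some ic by simp
  qed
qed

end
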